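(* Let $G$ be a flag with vertices $v_1,\dots,v_n$ ordered by increasing $x$-coordinate. Let $V^+=\{v_i: v_i \text{ is above } v_1v_2\}$ and $V^-=\{v_i: v_i \text{ is below } v_1v_2\}$. Then for $v_{i_1},v_{i_2}\in V^+$ with $i_1<i_2$ we have $v_1v_{i_1}\prec v_1v_{i_2}$, and for $v_{i_1},v_{i_2}\in V^-$ with $i_1<i_2$ we have $v_1v_{i_2}\prec v_1v_{i_1}$.
   Context: Let $\mathcal C=S^1\times\mathbb R$ ($S^1=[0,1]$ with $0\sim1$), points $p=(p_x,p_y)$ with $0\le p_x<1$. A flag is a graph drawn on $\mathcal C$ (vertices distinct points, edges Jordan arcs, no overlapping edges, no edge through a vertex) that is complete, simple (any two edges meet in at most one point: a common endpoint or a proper crossing), monotone (every edge meets each vertical line $l_{x=a}=\{p:p_x=a\}$ at most once, no two vertices share an $x$-coordinate, no vertex has $x$-coordinate $0$), and such that $l_{x=0}$ meets every edge in its relative interior. A point $v$ is related to an $x$-monotone curve $e$ if $l_{x=v_x}$ meets $e$ in its relative interior; then $v$ is below (above) $e$ if $v_y$ is smaller (larger) than the $y$-coordinate of $l_{x=v_x}\cap e$. Two $x$-monotone curves $e,f$ are related if they do not cross, some vertical line meets both relative interiors, and all such lines meet them in the same vertical order; then $e\prec f$ means that on every vertical line meeting both relative interiors, $e$'s point has $y$-coordinate at most that of $f$'s point. *)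

theory Defs
  imports "HOL-Analysis.Analysis"
begin

text \<open>Points of the cylinder C = S^1 x R are pairs (x,y) of reals with 0 <= x < 1.
  The cylinder topology is obtained from the embedding (x,y) |-> (cis (2 pi x), y).\<close>

type_synonym pt = "real \<times> real"

definition Cyl :: "pt set" where
  "Cyl = {p. 0 \<le> fst p \<and> fst p < 1}"

definition cyl_emb :: "pt \<Rightarrow> complex \<times> real" where
  "cyl_emb p = (cis (2 * pi * fst p), snd p)"

definition jordan_arc :: "pt set \<Rightarrow> pt \<Rightarrow> pt \<Rightarrow> bool" where
  "jordan_arc e u v \<longleftrightarrow> (\<exists>\<gamma> :: real \<Rightarrow> pt.
     \<gamma> ` {0..1} \<subseteq> Cyl \<and> continuous_on {0..1} (cyl_emb \<circ> \<gamma>) \<and> inj_on \<gamma> {0..1} \<and>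
     \<gamma> ` {0..1} = e \<and> \<gamma> 0 = u \<and> \<gamma> 1 = v)"

text \<open>Curves below are given by their relative interiors R (sets of points).
  The vertical line at x = a meets R iff a is in xproj R; yval R a is the y-coordinate
  of that (unique, for x-monotone curves) intersection point.\<close>

definition xproj :: "pt set \<Rightarrow> real set" where
  "xproj R = {a. \<exists>y. (a, y) \<in> R}"

definition yval :: "pt set \<Rightarrow> real \<Rightarrow> real" where
  "yval R a = (THE y. (a, y) \<in> R)"

text \<open>Proper crossing of two x-monotone curves at a common point p: on one side of the
  vertical line through p (locally, on the circle S^1) one curve is strictly below the other,
  on the other side strictly above.\<close>
definition crosses_at :: "pt set \<Rightarrow> pt set \<Rightarrow> pt \<Rightarrow> bool" where
  "crosses_at R S p \<longleftrightarrow> p \<in> R \<and> p \<in> S \<and> (\<exists>\<delta>>0.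
     (\<forall>t. 0 < t \<and> t < \<delta> \<longrightarrow>
        frac (fst p - t) \<in> xproj R \<inter> xproj S \<and> frac (fst p + t) \<in> xproj R \<inter> xproj S) \<and>
     ((\<forall>t. 0 < t \<and> t < \<delta> \<longrightarrow> yval R (frac (fst p - t)) < yval S (frac (fst p - t)) \<and>
                                 yval R (frac (fst p + t)) > yval S (frac (fst p + t))) \<or>
      (\<forall>t. 0 < t \<and> t < \<delta> \<longrightarrow> yval R (frac (fst p - t)) > yval S (frac (fst p - t)) \<and>
                                 yval R (frac (fst p + t)) < yval S (frac (fst p + t)))))"

definition crosses :: "pt set \<Rightarrow> pt set \<Rightarrow> bool" where
  "crosses R S \<longleftrightarrow> (\<exists>p. crosses_at R S p)"

definition curves_related :: "pt set \<Rightarrow> pt set \<Rightarrow> bool" where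
  "curves_related R S \<longleftrightarrow> \<not> crosses R S \<and> xproj R \<inter> xproj S \<noteq> {} \<and>
     ((\<forall>a \<in> xproj R \<inter> xproj S. yval R a \<le> yval S a) \<or>
      (\<forall>a \<in> xproj R \<inter> xproj S. yval S a \<le> yval R a))"

definition curve_prec :: "pt set \<Rightarrow> pt set \<Rightarrow> bool" where
  "curve_prec R S \<longleftrightarrow> curves_related R S \<and> (\<forall>a \<in> xproj R \<inter> xproj S. yval R a \<le> yval S a)"

definition pt_above :: "pt \<Rightarrow> pt set \<Rightarrow> bool" where
  "pt_above v R \<longleftrightarrow> fst v \<in> xproj R \<and> snd v > yval R (fst v)"

definition pt_below :: "pt \<Rightarrow> pt set \<Rightarrow> bool" where
  "pt_below v R \<longleftrightarrow> fst v \<in> xproj R \<and> snd v < yval R (fst v)"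

definition edge_ri :: "(pt \<Rightarrow> pt \<Rightarrow> pt set) \<Rightarrow> pt \<Rightarrow> pt \<Rightarrow> pt set" where
  "edge_ri E u v = E u v - {u, v}"

text \<open>A flag: complete simple monotone drawing on the cylinder of the complete graph on V,
  with edge uv drawn as the set E u v, and every edge crossing the line x = 0.\<close>
definition flag :: "pt set \<Rightarrow> (pt \<Rightarrow> pt \<Rightarrow> pt set) \<Rightarrow> bool" where
  "flag V E \<longleftrightarrow>
     finite V \<and> V \<subseteq> Cyl \<and>
     (\<forall>v\<in>V. fst v \<noteq> 0) \<and> inj_on fst V \<and>
     (\<forall>u\<in>V. \<forall>v\<in>V. u \<noteq> v \<longrightarrow> E u v = E v u \<and> jordan_arc (E u v) u v) \<and>
     (\<forall>u\<in>V. \<forall>v\<in>V. \<forall>w\<in>V. u \<noteq> v \<and> w \<noteq> u \<and> w \<noteq> v \<longrightarrow> w \<notin> E u v) \<and>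
     (\<forall>u\<in>V. \<forall>v\<in>V. \<forall>w\<in>V. \<forall>z\<in>V. u \<noteq> v \<and> w \<noteq> z \<and> {u, v} \<noteq> {w, z} \<longrightarrow>
        E u v \<inter> E w z = {} \<or>
        (\<exists>p. E u v \<inter> E w z = {p} \<and>
             (p \<in> {u, v} \<inter> {w, z} \<or> crosses_at (edge_ri E u v) (edge_ri E w z) p))) \<and>
     (\<forall>u\<in>V. \<forall>v\<in>V. u \<noteq> v \<longrightarrow> (\<forall>a y y'. (a, y) \<in> E u v \<longrightarrow> (a, y') \<in> E u v \<longrightarrow> y = y')) \<and>
     (\<forall>u\<in>V. \<forall>v\<in>V. u \<noteq> v \<longrightarrow> (\<exists>y. (0, y) \<in> edge_ri E u v))"

end

theory Submission
  imports Defs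
begin

context fixes V E assumes F: "flag V E" begin
lemma fl1: "finite V" using F unfolding flag_def by (elim conjE) assumption
lemma fl2: "V \<subseteq> Cyl" using F unfolding flag_def by (elim conjE) assumption
lemma fl3: "\<forall>v\<in>V. fst v \<noteq> 0" using F unfolding flag_def by (elim conjE) assumption
lemma fl4: "inj_on fst V" using F unfolding flag_def by (elim conjE) assumption
lemma fl5: "\<forall>u\<in>V. \<forall>v\<in>V. u \<noteq> v \<longrightarrow> E u v = E v u \<and> jordan_arc (E u v) u v" using F unfolding flag_def by (elim conjE) assumption
lemma fl6: "\<forall>u\<in>V. \<forall>v\<in>V. \<forall>w\<in>V. u \<noteq> v \<and> w \<noteq> u \<and> w \<noteq> v \<longrightarrow> w \<notin> E u v" using F unfolding flag_def by (elim conjE) assumption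
lemma fl7: "\<forall>u\<in>V. \<forall>v\<in>V. \<forall>w\<in>V. \<forall>z\<in>V. u \<noteq> v \<and> w \<noteq> z \<and> {u, v} \<noteq> {w, z} \<longrightarrow>
        E u v \<inter> E w z = {} \<or>
        (\<exists>p. E u v \<inter> E w z = {p} \<and>
             (p \<in> {u, v} \<inter> {w, z} \<or> crosses_at (edge_ri E u v) (edge_ri E w z) p))" using F unfolding flag_def by (elim conjE) assumption
lemma fl8: "\<forall>u\<in>V. \<forall>v\<in>V. u \<noteq> v \<longrightarrow> (\<forall>a y y'. (a, y) \<in> E u v \<longrightarrow> (a, y') \<in> E u v \<longrightarrow> y = y')" using F unfolding flag_def by (elim conjE) assumption
lemma fl9: "\<forall>u\<in>V. \<forall>v\<in>V. u \<noteq> v \<longrightarrow> (\<exists>y. (0, y) \<in> edge_ri E u v)" using F unfolding flag_def by (elim conjE) assumption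
end

lemma int_not_01: "(x::real) \<in> \<int> \<Longrightarrow> 0 < x \<Longrightarrow> x < 1 \<Longrightarrow> False"
  by (auto elim!: Ints_cases)

lemma edge_param:
  assumes F: "flag V E" and u: "u \<in> V" and w: "w \<in> V" and uw: "fst u < fst w"
  shows "\<exists>Y. continuous_on {fst w - 1..fst u} Y \<and> Y (fst u) = snd u \<and> Y (fst w - 1) = snd w \<and>
           E u w = (\<lambda>t. (frac t, Y t)) ` {fst w - 1..fst u}"
proof -
  have neq: "u \<noteq> w" using uw by auto
  have ja: "jordan_arc (E u w) u w" using fl5[OF F] u w neq by blast
  have mono: "\<And>a y y'. (a, y) \<in> E u w \<Longrightarrow> (a, y') \<in> E u w \<Longrightarrow> y = y'"
    using fl8[OF F] u w neq by blast
  obtain y0 where y0: "(0, y0) \<in> edge_ri E u w" using fl9[OF F] u w neq by blast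
  have cylu: "0 \<le> fst u" "fst u < 1" "fst u \<noteq> 0" "0 \<le> fst w" "fst w < 1"
    using u w fl2[OF F] fl3[OF F] unfolding Cyl_def by auto
  from ja obtain \<gamma> :: "real \<Rightarrow> pt" where g: "\<gamma> ` {0..1} \<subseteq> Cyl" "continuous_on {0..1} (cyl_emb \<circ> \<gamma>)"
     "inj_on \<gamma> {0..1}" "\<gamma> ` {0..1} = E u w" "\<gamma> 0 = u" "\<gamma> 1 = w"
    unfolding jordan_arc_def by blast
  have cylg: "\<And>s. s \<in> {0..1} \<Longrightarrow> 0 \<le> fst (\<gamma> s) \<and> fst (\<gamma> s) < 1" using g(1) unfolding Cyl_def by (auto simp: image_subset_iff)
  define f where "f s = cis (2 * pi * fst (\<gamma> s))" for s
  have cf: "continuous_on {0..1} f"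
  proof -
    have "continuous_on {0..1} (\<lambda>s. fst ((cyl_emb \<circ> \<gamma>) s))" by (intro continuous_intros g(2))
    thus ?thesis by (simp add: f_def cyl_emb_def o_def)
  qed
  have "contractible {0..1::real}" by (simp add: convex_imp_contractible)
  then obtain g0 where g0: "continuous_on {0..1} g0" "\<And>s. s \<in> {0..1} \<Longrightarrow> f s = exp (g0 s)"
    using continuous_logarithm_on_contractible[OF cf] by (metis cis_neq_zero f_def)
  define L where "L s = Im (g0 s) / (2 * pi)" for s
  have cL: "continuous_on {0..1} L" unfolding L_def by (intro continuous_intros g0(1)) auto
  have fracL: "frac (L s) = fst (\<gamma> s)" if s: "s \<in> {0..1}" for s
  proof -
    have "exp (g0 s) = exp (\<i> * of_real (2 * pi * fst (\<gamma> s)))"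
      using g0(2)[OF s] by (simp add: f_def cis_conv_exp)
    then obtain n :: int where n: "g0 s = \<i> * of_real (2 * pi * fst (\<gamma> s)) + (of_int (2 * n) * pi) * \<i>"
      using exp_eq by blast
    hence "Im (g0 s) = 2 * pi * fst (\<gamma> s) + 2 * n * pi" by simp
    hence "L s = fst (\<gamma> s) + of_int n" unfolding L_def by (simp add: field_simps)
    thus ?thesis using cylg[OF s] by (simp add: frac_eq)
  qed
  have fr: "s = t" if "s \<in> {0..1}" "t \<in> {0..1}" "frac (L s) = frac (L t)" for s t
  proof -
    have "fst (\<gamma> s) = fst (\<gamma> t)" using that fracL by auto
    moreover have "\<gamma> s \<in> E u w" "\<gamma> t \<in> E u w" using g(4) that by auto
    ultimately have "\<gamma> s = \<gamma> t" using mono by (metis prod.collapse)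
    thus ?thesis using g(3) that by (auto dest: inj_onD)
  qed
  have "L 0 - fst u \<in> \<int>" using fracL[of 0] g(5) by (simp add: frac_unique_iff)
  then obtain k :: int where k: "L 0 - fst u = of_int k" by (auto elim!: Ints_cases)
  define M where "M s = L s - of_int k" for s
  have cM: "continuous_on {0..1} M" unfolding M_def by (intro continuous_intros cL)
  have fracM: "frac (M s) = fst (\<gamma> s)" if "s \<in> {0..1}" for s
  proof -
    have "L s - of_int k = L s + of_int (-k)" by simp
    thus ?thesis using fracL[OF that] unfolding M_def by (simp only: frac_add_of_int_right)
  qed
  have frM: "s = t" if "s \<in> {0..1}" "t \<in> {0..1}" "frac (M s) = frac (M t)" for s t
    using fr[OF that(1,2)] that fracL fracM by auto
  have injM: "inj_on M {0..1}" by (rule inj_onI) (use frM in auto)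
  have M0: "M 0 = fst u" unfolding M_def using k by simp
  have "frac (M 1) = fst w" using fracM[of 1] g(6) by simp
  hence "M 1 - fst w \<in> \<int>" by (simp add: frac_unique_iff)
  then obtain m :: int where "M 1 - fst w = of_int m" by (auto elim!: Ints_cases)
  hence m: "M 1 = fst w + of_int m" by simp
  have monoM: "(M 0 < M s \<and> M s < M 1) \<or> (M 1 < M s \<and> M s < M 0)" if "0 < s" "s < 1" for s
    using continuous_inj_imp_mono[OF that cM injM] .
  have lt1: "M 1 < M 0 + 1"
  proof (rule ccontr)
    assume "\<not> ?thesis"
    then obtain s where s: "0 \<le> s" "s \<le> 1" "M s = M 0 + 1" using IVT'[OF _ _ _ cM, of "M 0 + 1"] by auto
    have "frac (M s) = frac (M 0)" using s(3) by (simp add: frac_1_eq)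
    hence "s = 0" using frM[of s 0] s by auto
    thus False using s by simp
  qed
  have gt1: "M 0 - 1 < M 1"
  proof (rule ccontr)
    assume "\<not> ?thesis"
    then obtain s where s: "0 \<le> s" "s \<le> 1" "M s = M 0 - 1" using IVT2'[OF _ _ _ cM, of "M 0 - 1"] by auto
    have "frac (M s) = frac (M 0)" using s(3) by (metis diff_add_cancel frac_1_eq)
    hence "s = 0" using frM[of s 0] s by auto
    thus False using s by simp
  qed
  have mle: "m \<le> 0" "m \<ge> -1" using lt1 gt1 m M0 cylu uw by linarith+
  have "m \<noteq> 0"
  proof
    assume m0: "m = 0"
    have "(0, y0) \<in> E u w" "(0, y0) \<noteq> u" "(0, y0) \<noteq> w" using y0 unfolding edge_ri_def by auto
    then obtain s where s: "s \<in> {0..1}" "\<gamma> s = (0, y0)" using g(4) by (metis imageE)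
    have "s \<noteq> 0" "s \<noteq> 1" using s g(5,6) \<open>(0, y0) \<noteq> u\<close> \<open>(0, y0) \<noteq> w\<close> by auto
    hence "0 < s" "s < 1" using s by auto
    hence "0 < M s" "M s < 1" using monoM[of s] M0 m m0 cylu uw by auto
    moreover have "M s \<in> \<int>" using fracM[OF s(1)] s(2) by simp
    ultimately show False using int_not_01 by blast
  qed
  hence M1: "M 1 = fst w - 1" using m mle by simp
  have img: "M ` {0..1} = {fst w - 1..fst u}"
  proof
    show "M ` {0..1} \<subseteq> {fst w - 1..fst u}"
    proof
      fix t assume "t \<in> M ` {0..1}"
      then obtain s where s: "s \<in> {0..1}" "t = M s" by auto
      show "t \<in> {fst w - 1..fst u}"
      proof (cases "s = 0 \<or> s = 1")
        case True thus ?thesis using s M0 M1 cylu uw by auto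
      next
        case False
        hence "0 < s" "s < 1" using s by auto
        thus ?thesis using monoM[of s] s M0 M1 cylu uw by auto
      qed
    qed
  next
    show "{fst w - 1..fst u} \<subseteq> M ` {0..1}"
    proof
      fix t assume t: "t \<in> {fst w - 1..fst u}"
      then obtain s where "0 \<le> s" "s \<le> 1" "M s = t" using IVT2'[OF _ _ _ cM, of t] M0 M1 by auto
      thus "t \<in> M ` {0..1}" by auto
    qed
  qed
  define Y where "Y t = snd (\<gamma> (inv_into {0..1} M t))" for t
  have cinv: "continuous_on (M ` {0..1}) (inv_into {0..1} M)"
    by (rule continuous_on_inv[OF cM]) (use injM in auto)
  have csnd: "continuous_on {0..1} (\<lambda>s. snd (\<gamma> s))"
  proof -
    have "continuous_on {0..1} (\<lambda>s. snd ((cyl_emb \<circ> \<gamma>) s))" by (intro continuous_intros g(2))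
    thus ?thesis by (simp add: cyl_emb_def o_def)
  qed
  have cY: "continuous_on {fst w - 1..fst u} Y"
    unfolding Y_def img[symmetric]
    by (rule continuous_on_compose2[OF csnd cinv]) (auto intro: inv_into_into)
  have YM: "Y (M s) = snd (\<gamma> s)" if "s \<in> {0..1}" for s
    unfolding Y_def using injM that by simp
  have "E u w = (\<lambda>t. (frac t, Y t)) ` (M ` {0..1})"
  proof -
    have "\<gamma> s = (frac (M s), Y (M s))" if "s \<in> {0..1}" for s
      using fracM[OF that] YM[OF that] by (metis prod.collapse)
    hence "\<gamma> ` {0..1} = (\<lambda>s. (frac (M s), Y (M s))) ` {0..1}" by (intro image_cong) auto
    thus ?thesis using g(4) by (simp add: image_image)
  qed
  moreover have "Y (fst u) = snd u" using YM[of 0] M0 g(5) by simp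
  moreover have "Y (fst w - 1) = snd w" using YM[of 1] M1 g(6) by simp
  ultimately show ?thesis using cY img by auto
qed




lemma sign_keep:
  fixes h :: "real \<Rightarrow> real"
  assumes c: "continuous_on {p..q} h" and s: "s \<in> {p..q}" "h s > 0"
    and nz: "\<forall>t\<in>{p<..<q}. h t \<noteq> 0" and t: "t \<in> {p..q}"
  shows "h t \<ge> 0"
proof (rule ccontr)
  assume "\<not> h t \<ge> 0"
  hence ht: "h t < 0" by simp
  show False
  proof (cases "t \<le> s")
    case True
    have "continuous_on {t..s} h" using c s t by (auto intro: continuous_on_subset)
    then obtain z where z: "t \<le> z" "z \<le> s" "h z = 0" using IVT'[of h t 0 s] ht s True by auto
    have "z \<noteq> t" "z \<noteq> s" using z ht s by auto
    thus False using nz z s t by auto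
  next
    case False
    have "continuous_on {s..t} h" using c s t by (auto intro: continuous_on_subset)
    then obtain z where z: "s \<le> z" "z \<le> t" "h z = 0" using IVT2'[of h t 0 s] ht s False by auto
    have "z \<noteq> t" "z \<noteq> s" using z ht s by auto
    thus False using nz z s t by auto
  qed
qed

lemma ivt_zero:
  fixes h :: "real \<Rightarrow> real"
  assumes c: "continuous_on {p..q} h" "p \<le> q" "h p > 0" "h q < 0"
  shows "\<exists>t\<in>{p<..<q}. h t = 0"
proof -
  obtain z where z: "p \<le> z" "z \<le> q" "h z = 0" using IVT2'[of h q 0 p] assms by auto
  hence "z \<noteq> p" "z \<noteq> q" using assms by auto
  thus ?thesis using z by auto
qed

lemma core:
  fixes Yb Yc Yd Ybc Ycd :: "real \<Rightarrow> real"
  assumes x: "0 < xa" "xa < xb" "xb < xc" "xc < xd" "xd < 1"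
    and cb: "continuous_on {xb-1..xa} Yb" "Yb xa = ya" "Yb (xb-1) = yb"
    and cc: "continuous_on {xc-1..xa} Yc" "Yc xa = ya" "Yc (xc-1) = yc"
    and cd: "continuous_on {xd-1..xa} Yd" "Yd xa = ya" "Yd (xd-1) = yd"
    and cbc: "continuous_on {xc-1..xb} Ybc" "Ybc (xc-1) = yc" "Ybc xb = yb"
    and ccd: "continuous_on {xd-1..xc} Ycd" "Ycd (xd-1) = yd" "Ycd xc = yc"
    and a1: "Yb (xc-1) < yc" and a2: "Yb (xd-1) < yd"
    and H1: "\<forall>t\<in>{xc-1<..<xa}. Yb t \<noteq> Yc t"
    and H2: "\<forall>t\<in>{xd-1<..<xa}. Yc t \<noteq> Yd t"
    and H3: "\<forall>t\<in>{xc-1<..<xa}. Ybc t \<noteq> Yb t"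
    and H4: "\<forall>t\<in>{xc-1<..<xa}. Ybc t \<noteq> Yc t"
    and H5: "\<forall>t\<in>{xd-1<..<xb}. Ycd t \<noteq> Ybc t"
    and H6: "\<forall>t\<in>{xd-1<..<xa}. Ycd t \<noteq> Yc t"
    and P1: "Yc (xd-1) \<noteq> yd" and P2: "Ybc xa \<noteq> ya" and P3: "Ycd xb \<noteq> yb"
    and P4: "Ycd xa \<noteq> ya"
    and two: "\<not> (\<exists>t1\<in>{xd-1<..<xa}. \<exists>t2\<in>{xb<..<xc}. Ycd t1 = Yb t1 \<and> Ycd t2 = Yb (t2-1))"
  shows "\<forall>t\<in>{xd-1<..<xa}. Yc t \<le> Yd t"
proof (rule ccontr)
  assume "\<not> ?thesis"
  then obtain t0 where t0: "t0 \<in> {xd-1<..<xa}" "Yc t0 > Yd t0" by force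
  have sub1: "continuous_on {xd-1..xa} Yc" using cc(1) x by (auto intro: continuous_on_subset)
  have sub2: "continuous_on {xd-1..xa} Yb" using cb(1) x by (auto intro: continuous_on_subset)
  have sub3: "continuous_on {xc-1..xa} Yb" using cb(1) x by (auto intro: continuous_on_subset)
  have sub4: "continuous_on {xc-1..xa} Ybc" using cbc(1) x by (auto intro: continuous_on_subset)
  have sub5: "continuous_on {xd-1..xb} Ybc" using cbc(1) x by (auto intro: continuous_on_subset)
  have sub6: "continuous_on {xd-1..xb} Ycd" using ccd(1) x by (auto intro: continuous_on_subset)
  have sub7: "continuous_on {xd-1..xa} Ycd" using ccd(1) x by (auto intro: continuous_on_subset)
  have "(\<lambda>t. Yc t - Yd t) (xd-1) \<ge> 0"
    by (rule sign_keep[of "xd-1" xa _ t0]) (use t0 H2 x in \<open>auto intro!: continuous_intros sub1 cd(1)\<close>)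
  hence i: "Yc (xd-1) > yd" using P1 cd by auto
  have ii: "\<And>t. t \<in> {xc-1..xa} \<Longrightarrow> Ybc t - Yb t \<ge> 0"
    by (rule sign_keep[of "xc-1" xa _ "xc-1"]) (use H3 x a1 cbc in \<open>auto intro!: continuous_intros sub3 sub4\<close>)
  have iii: "Ybc (xd-1) > Yc (xd-1)"
  proof (rule ccontr)
    assume "\<not> ?thesis"
    moreover have "xd-1 \<in> {xc-1<..<xa}" using x by auto
    ultimately have "Ybc (xd-1) < Yc (xd-1)" using H4 by fastforce
    hence "(\<lambda>t. Yc t - Ybc t) xa \<ge> 0"
      by (intro sign_keep[of "xc-1" xa _ "xd-1"]) (use H4 x in \<open>auto intro!: continuous_intros sub4 cc(1)\<close>)
    moreover have "Ybc xa - Yb xa \<ge> 0" using ii x by auto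
    ultimately show False using P2 cb cc by auto
  qed
  have "(\<lambda>t. Ybc t - Ycd t) xb \<ge> 0"
    by (rule sign_keep[of "xd-1" xb _ "xd-1"]) (use H5 x iii i ccd in \<open>auto intro!: continuous_intros sub5 sub6\<close>)
  hence iv: "Ycd xb < yb" using P3 cbc by auto
  have "(\<lambda>t. Yc t - Ycd t) xa \<ge> 0"
    by (rule sign_keep[of "xd-1" xa _ "xd-1"]) (use H6 x i ccd in \<open>auto intro!: continuous_intros sub1 sub7\<close>)
  hence v: "Ycd xa < ya" using P4 cc by auto
  have "continuous_on {xd-1..xa} (\<lambda>t. Ycd t - Yb t)" by (intro continuous_intros sub2 sub7)
  then obtain t1 where t1: "t1 \<in> {xd-1<..<xa}" "(\<lambda>t. Ycd t - Yb t) t1 = 0"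
    using ivt_zero[of "xd-1" xa "\<lambda>t. Ycd t - Yb t"] x a2 ccd cb v by auto
  have sub8: "continuous_on {xb..xc} Ycd" using ccd(1) x by (auto intro: continuous_on_subset)
  have sub9: "continuous_on {xb..xc} (\<lambda>t. Yb (t-1))"
    by (rule continuous_on_compose2[OF cb(1), of _ "\<lambda>t. t - 1"]) (use x in \<open>auto intro!: continuous_intros\<close>)
  have "continuous_on {xb..xc} (\<lambda>t. Yb (t-1) - Ycd t)" by (intro continuous_intros sub8 sub9)
  then obtain t2 where t2: "t2 \<in> {xb<..<xc}" "(\<lambda>t. Yb (t-1) - Ycd t) t2 = 0"
    using ivt_zero[of xb xc "\<lambda>t. Yb (t-1) - Ycd t"] x a1 ccd cb iv by auto
  have "Ycd t1 = Yb t1" "Ycd t2 = Yb (t2-1)" using t1 t2 by auto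
  thus False using two t1(1) t2(1) by blast
qed




lemma frac_inj: "frac (t::real) = frac s \<Longrightarrow> \<bar>t - s\<bar> < 1 \<Longrightarrow> t = s"
proof (erule frac_eqE)
  fix n :: int assume "t = s + of_int n" "\<bar>t - s\<bar> < 1"
  hence "\<bar>real_of_int n\<bar> < 1" by simp
  hence "\<bar>n\<bar> < 1" by linarith
  hence "n = 0" by simp
  thus "t = s" using \<open>t = s + of_int n\<close> by simp
qed

lemma edge_props:
  assumes F: "flag V E" and u: "u \<in> V" and w: "w \<in> V" and uw: "fst u < fst w"
  obtains Y where "continuous_on {fst w - 1..fst u} Y" "Y (fst u) = snd u" "Y (fst w - 1) = snd w"
    "\<And>t. t \<in> {fst w - 1..fst u} \<Longrightarrow> (frac t, Y t) \<in> E u w"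
    "\<And>x. x \<in> xproj (edge_ri E u w) \<longleftrightarrow> (\<exists>t\<in>{fst w - 1<..<fst u}. x = frac t)"
    "\<And>t. t \<in> {fst w - 1<..<fst u} \<Longrightarrow> yval (edge_ri E u w) (frac t) = Y t"
proof -
  have neq: "u \<noteq> w" using uw by auto
  have mono: "\<And>a y y'. (a, y) \<in> E u w \<Longrightarrow> (a, y') \<in> E u w \<Longrightarrow> y = y'"
    using fl8[OF F] u w neq by blast
  have cylu: "0 \<le> fst u" "fst u < 1" "fst u \<noteq> 0" "0 \<le> fst w" "fst w < 1"
    using u w fl2[OF F] fl3[OF F] unfolding Cyl_def by auto
  obtain Y where Y: "continuous_on {fst w - 1..fst u} Y" "Y (fst u) = snd u" "Y (fst w - 1) = snd w"
    "E u w = (\<lambda>t. (frac t, Y t)) ` {fst w - 1..fst u}" using edge_param[OF F u w uw] by blast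
  have fu: "frac (fst u) = fst u" using cylu by (simp add: frac_eq)
  have fw: "frac (fst w - 1) = fst w" using cylu by (metis diff_add_cancel frac_1_eq frac_eq)
  have mem: "\<And>t. t \<in> {fst w - 1..fst u} \<Longrightarrow> (frac t, Y t) \<in> E u w" using Y(4) by auto
  have ri: "(frac t, Y t) \<in> edge_ri E u w" if t: "t \<in> {fst w - 1<..<fst u}" for t
  proof -
    have "frac t \<noteq> fst u" using frac_inj[of t "fst u"] fu t cylu uw by auto
    moreover have "frac t \<noteq> fst w" using frac_inj[of t "fst w - 1"] fw t cylu uw by auto
    ultimately show ?thesis using mem[of t] t unfolding edge_ri_def by (auto simp: prod_eq_iff)
  qed
  have xp: "x \<in> xproj (edge_ri E u w) \<longleftrightarrow> (\<exists>t\<in>{fst w - 1<..<fst u}. x = frac t)" for x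
  proof
    assume "x \<in> xproj (edge_ri E u w)"
    then obtain y where "(x, y) \<in> edge_ri E u w" unfolding xproj_def by auto
    hence xy: "(x, y) \<in> E u w" "(x, y) \<noteq> u" "(x, y) \<noteq> w" unfolding edge_ri_def by auto
    then obtain t where t: "t \<in> {fst w - 1..fst u}" "(x, y) = (frac t, Y t)" using Y(4) by auto
    have "t \<noteq> fst u" using t xy Y(2) fu by (metis prod.collapse)
    moreover have "t \<noteq> fst w - 1" using t xy Y(3) fw by (metis prod.collapse)
    ultimately show "\<exists>t\<in>{fst w - 1<..<fst u}. x = frac t" using t by auto
  next
    assume "\<exists>t\<in>{fst w - 1<..<fst u}. x = frac t"
    then obtain t where "t \<in> {fst w - 1<..<fst u}" "x = frac t" by auto
    thus "x \<in> xproj (edge_ri E u w)" using ri unfolding xproj_def by auto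
  qed
  have yv: "yval (edge_ri E u w) (frac t) = Y t" if t: "t \<in> {fst w - 1<..<fst u}" for t
    unfolding yval_def
  proof (rule the_equality)
    show "(frac t, Y t) \<in> edge_ri E u w" using ri t .
    fix y assume "(frac t, y) \<in> edge_ri E u w"
    thus "y = Y t" using mono[of "frac t" y "Y t"] ri[OF t] unfolding edge_ri_def by auto
  qed
  show ?thesis by (rule that[OF Y(1-3) mem xp yv])
qed

lemma endpts:
  assumes F: "flag V E" and u: "u \<in> V" and v: "v \<in> V" and "u \<noteq> v"
  shows "u \<in> E u v" "v \<in> E u v"
proof -
  have "jordan_arc (E u v) u v" using fl5[OF F] assms by blast
  then obtain \<gamma> :: "real \<Rightarrow> pt" where "\<gamma> ` {0..1} = E u v" "\<gamma> 0 = u" "\<gamma> 1 = v"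
    unfolding jordan_arc_def by blast
  thus "u \<in> E u v" "v \<in> E u v" by force+
qed

lemma adj:
  assumes F: "flag V E" and V: "u \<in> V" "v \<in> V" "w \<in> V" and d: "u \<noteq> v" "u \<noteq> w" "v \<noteq> w"
    and p: "p \<in> E u v" "p \<in> E u w"
  shows "p = u"
proof -
  have "{u, v} \<noteq> {u, w}" using d by (auto simp: doubleton_eq_iff)
  hence "E u v \<inter> E u w = {} \<or> (\<exists>q. E u v \<inter> E u w = {q} \<and> (q \<in> {u, v} \<inter> {u, w} \<or>
      crosses_at (edge_ri E u v) (edge_ri E u w) q))"
    using fl7[OF F] V d by blast
  hence "\<exists>q. E u v \<inter> E u w \<subseteq> {q}" by blast
  moreover have "u \<in> E u v \<inter> E u w" using endpts[OF F] V d by auto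
  ultimately show ?thesis using p by blast
qed

lemma nonadj:
  assumes F: "flag V E" and V: "a \<in> V" "b \<in> V" "c \<in> V" "d \<in> V"
    and dd: "a \<noteq> b" "c \<noteq> d" "a \<noteq> c" "a \<noteq> d"
    and p: "p \<in> E a b" "p \<in> E c d" "q \<in> E a b" "q \<in> E c d"
  shows "p = q"
proof -
  have "{a, b} \<noteq> {c, d}" using dd by (auto simp: doubleton_eq_iff)
  hence "E a b \<inter> E c d = {} \<or> (\<exists>r. E a b \<inter> E c d = {r} \<and> (r \<in> {a, b} \<inter> {c, d} \<or>
      crosses_at (edge_ri E a b) (edge_ri E c d) r))"
    using fl7[OF F] V dd by blast
  hence "\<exists>r. E a b \<inter> E c d \<subseteq> {r}" by blast
  thus ?thesis using p by blast
qed

lemma sym_E: "flag V E \<Longrightarrow> u \<in> V \<Longrightarrow> v \<in> V \<Longrightarrow> u \<noteq> v \<Longrightarrow> E u v = E v u"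
  using fl5 by blast

lemma avoid: "flag V E \<Longrightarrow> u \<in> V \<Longrightarrow> v \<in> V \<Longrightarrow> w \<in> V \<Longrightarrow> u \<noteq> v \<Longrightarrow> w \<noteq> u \<Longrightarrow> w \<noteq> v \<Longrightarrow> w \<notin> E u v"
  using fl6 by blast




lemma geo:
  assumes F: "flag V E" and V: "a \<in> V" "b \<in> V" "c \<in> V" "d \<in> V"
    and o: "fst a < fst b" "fst b < fst c" "fst c < fst d" and sg: "\<sigma> = 1 \<or> \<sigma> = (-1::real)"
    and h1: "\<sigma> * yval (edge_ri E a b) (fst c) < \<sigma> * snd c"
    and h2: "\<sigma> * yval (edge_ri E a b) (fst d) < \<sigma> * snd d"
  shows "\<forall>x \<in> xproj (edge_ri E a c) \<inter> xproj (edge_ri E a d).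
           \<sigma> * yval (edge_ri E a c) x \<le> \<sigma> * yval (edge_ri E a d) x"
proof -
  define xa where "xa = fst a"
  define xb where "xb = fst b"
  define xc where "xc = fst c"
  define xd where "xd = fst d"
  define ya where "ya = snd a"
  define yb where "yb = snd b"
  define yc where "yc = snd c"
  define yd where "yd = snd d"
  have "a \<in> Cyl" "d \<in> Cyl" using V fl2[OF F] by auto
  hence cy: "0 \<le> fst a" "fst d < 1" unfolding Cyl_def by auto
  have "fst a \<noteq> 0" using fl3[OF F] V by auto
  hence x: "0 < xa" "xa < xb" "xb < xc" "xc < xd" "xd < 1"
    using cy o unfolding xa_def xb_def xc_def xd_def by auto
  have ne: "a \<noteq> b" "a \<noteq> c" "a \<noteq> d" "b \<noteq> c" "b \<noteq> d" "c \<noteq> d" using o by auto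
  have sn: "\<sigma> \<noteq> 0" using sg by auto
  have fx: "\<And>z. 0 \<le> z \<Longrightarrow> z < 1 \<Longrightarrow> frac z = z" "\<And>z. 0 \<le> z \<Longrightarrow> z < 1 \<Longrightarrow> frac (z - 1) = z"
    by (simp add: frac_eq) (metis diff_add_cancel frac_1_eq frac_eq)
  have pa: "a = (xa, ya)" "b = (xb, yb)" "c = (xc, yc)" "d = (xd, yd)"
    unfolding xa_def ya_def xb_def yb_def xc_def yc_def xd_def yd_def by auto
  obtain Yb where Yb0: "continuous_on {fst b - 1..fst a} Yb"
    "Yb (fst a) = snd a"
    "Yb (fst b - 1) = snd b"
    "\<And>t. t \<in> {fst b - 1..fst a} \<Longrightarrow> (frac t, Yb t) \<in> E a b"
    "\<And>x. x \<in> xproj (edge_ri E a b) \<longleftrightarrow> (\<exists>t\<in>{fst b - 1<..<fst a}. x = frac t)"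
    "\<And>t. t \<in> {fst b - 1<..<fst a} \<Longrightarrow> yval (edge_ri E a b) (frac t) = Yb t"
    using edge_props[OF F V(1) V(2) o(1)] by blast
  note Yb = Yb0[folded xa_def xb_def ya_def yb_def]
  have oac: "fst a < fst c" using o by simp
  obtain Yc where Yc0: "continuous_on {fst c - 1..fst a} Yc"
    "Yc (fst a) = snd a"
    "Yc (fst c - 1) = snd c"
    "\<And>t. t \<in> {fst c - 1..fst a} \<Longrightarrow> (frac t, Yc t) \<in> E a c"
    "\<And>x. x \<in> xproj (edge_ri E a c) \<longleftrightarrow> (\<exists>t\<in>{fst c - 1<..<fst a}. x = frac t)"
    "\<And>t. t \<in> {fst c - 1<..<fst a} \<Longrightarrow> yval (edge_ri E a c) (frac t) = Yc t"
    using edge_props[OF F V(1) V(3) oac] by blast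
  note Yc = Yc0[folded xa_def xc_def ya_def yc_def]
  have oad: "fst a < fst d" using o by simp
  obtain Yd where Yd0: "continuous_on {fst d - 1..fst a} Yd"
    "Yd (fst a) = snd a"
    "Yd (fst d - 1) = snd d"
    "\<And>t. t \<in> {fst d - 1..fst a} \<Longrightarrow> (frac t, Yd t) \<in> E a d"
    "\<And>x. x \<in> xproj (edge_ri E a d) \<longleftrightarrow> (\<exists>t\<in>{fst d - 1<..<fst a}. x = frac t)"
    "\<And>t. t \<in> {fst d - 1<..<fst a} \<Longrightarrow> yval (edge_ri E a d) (frac t) = Yd t"
    using edge_props[OF F V(1) V(4) oad] by blast
  note Yd = Yd0[folded xa_def xd_def ya_def yd_def]
  obtain Ybc where Ybc0: "continuous_on {fst c - 1..fst b} Ybc"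
    "Ybc (fst b) = snd b"
    "Ybc (fst c - 1) = snd c"
    "\<And>t. t \<in> {fst c - 1..fst b} \<Longrightarrow> (frac t, Ybc t) \<in> E b c"
    "\<And>x. x \<in> xproj (edge_ri E b c) \<longleftrightarrow> (\<exists>t\<in>{fst c - 1<..<fst b}. x = frac t)"
    "\<And>t. t \<in> {fst c - 1<..<fst b} \<Longrightarrow> yval (edge_ri E b c) (frac t) = Ybc t"
    using edge_props[OF F V(2) V(3) o(2)] by blast
  note Ybc = Ybc0[folded xb_def xc_def yb_def yc_def]
  obtain Ycd where Ycd0: "continuous_on {fst d - 1..fst c} Ycd"
    "Ycd (fst c) = snd c"
    "Ycd (fst d - 1) = snd d"
    "\<And>t. t \<in> {fst d - 1..fst c} \<Longrightarrow> (frac t, Ycd t) \<in> E c d"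
    "\<And>x. x \<in> xproj (edge_ri E c d) \<longleftrightarrow> (\<exists>t\<in>{fst d - 1<..<fst c}. x = frac t)"
    "\<And>t. t \<in> {fst d - 1<..<fst c} \<Longrightarrow> yval (edge_ri E c d) (frac t) = Ycd t"
    using edge_props[OF F V(3) V(4) o(3)] by blast
  note Ycd = Ycd0[folded xc_def xd_def yc_def yd_def]
  have Eba: "E b a = E a b" "E c a = E a c" "E c b = E b c" using sym_E[OF F] V ne by auto
  have a1: "\<sigma> * Yb (xc-1) < \<sigma> * yc"
  proof -
    have "yval (edge_ri E a b) (frac (xc - 1)) = Yb (xc - 1)" using Yb(6) x by auto
    thus ?thesis using h1 fx(2)[of xc] x unfolding xc_def yc_def by auto
  qed
  have a2: "\<sigma> * Yb (xd-1) < \<sigma> * yd"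
  proof -
    have "yval (edge_ri E a b) (frac (xd - 1)) = Yb (xd - 1)" using Yb(6) x by auto
    thus ?thesis using h2 fx(2)[of xd] x unfolding xd_def yd_def by auto
  qed
  have H1: "\<forall>t\<in>{xc-1<..<xa}. \<sigma> * Yb t \<noteq> \<sigma> * Yc t"
  proof (intro ballI notI)
    fix t assume t: "t \<in> {xc-1<..<xa}" and e: "\<sigma> * Yb t = \<sigma> * Yc t"
    have m1: "(frac t, Yb t) \<in> E a b" using Yb(4)[of t] t x Eba by auto
    have m2: "(frac t, Yb t) \<in> E a c" using Yc(4)[of t] t x e sn Eba by auto
    from m1 m2 have "(frac t, Yb t) = a" using adj[OF F V(1,2,3)] ne by blast
    hence "frac t = frac xa" using pa fx(1)[of xa] x by auto
    hence "t = xa" by (rule frac_inj) (use t x in auto)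
    thus False using t by auto
  qed
  have H2: "\<forall>t\<in>{xd-1<..<xa}. \<sigma> * Yc t \<noteq> \<sigma> * Yd t"
  proof (intro ballI notI)
    fix t assume t: "t \<in> {xd-1<..<xa}" and e: "\<sigma> * Yc t = \<sigma> * Yd t"
    have m1: "(frac t, Yc t) \<in> E a c" using Yc(4)[of t] t x Eba by auto
    have m2: "(frac t, Yc t) \<in> E a d" using Yd(4)[of t] t x e sn Eba by auto
    from m1 m2 have "(frac t, Yc t) = a" using adj[OF F V(1,3,4)] ne by blast
    hence "frac t = frac xa" using pa fx(1)[of xa] x by auto
    hence "t = xa" by (rule frac_inj) (use t x in auto)
    thus False using t by auto
  qed
  have H3: "\<forall>t\<in>{xc-1<..<xa}. \<sigma> * Ybc t \<noteq> \<sigma> * Yb t"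
  proof (intro ballI notI)
    fix t assume t: "t \<in> {xc-1<..<xa}" and e: "\<sigma> * Ybc t = \<sigma> * Yb t"
    have m1: "(frac t, Ybc t) \<in> E b c" using Ybc(4)[of t] t x Eba by auto
    have m2: "(frac t, Ybc t) \<in> E b a" using Yb(4)[of t] t x e sn Eba by auto
    from m1 m2 have "(frac t, Ybc t) = b" using adj[OF F V(2,3,1)] ne by blast
    hence "frac t = frac (xb - 1)" using pa fx(2)[of xb] x by auto
    hence "t = xb - 1" by (rule frac_inj) (use t x in auto)
    thus False using t x by auto
  qed
  have H4: "\<forall>t\<in>{xc-1<..<xa}. \<sigma> * Ybc t \<noteq> \<sigma> * Yc t"
  proof (intro ballI notI)
    fix t assume t: "t \<in> {xc-1<..<xa}" and e: "\<sigma> * Ybc t = \<sigma> * Yc t"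
    have m1: "(frac t, Ybc t) \<in> E c b" using Ybc(4)[of t] t x Eba by auto
    have m2: "(frac t, Ybc t) \<in> E c a" using Yc(4)[of t] t x e sn Eba by auto
    from m1 m2 have "(frac t, Ybc t) = c" using adj[OF F V(3,2,1)] ne by blast
    hence "frac t = frac (xc - 1)" using pa fx(2)[of xc] x by auto
    hence "t = xc - 1" by (rule frac_inj) (use t x in auto)
    thus False using t x by auto
  qed
  have H5: "\<forall>t\<in>{xd-1<..<xb}. \<sigma> * Ycd t \<noteq> \<sigma> * Ybc t"
  proof (intro ballI notI)
    fix t assume t: "t \<in> {xd-1<..<xb}" and e: "\<sigma> * Ycd t = \<sigma> * Ybc t"
    have m1: "(frac t, Ycd t) \<in> E c d" using Ycd(4)[of t] t x Eba by auto
    have m2: "(frac t, Ycd t) \<in> E c b" using Ybc(4)[of t] t x e sn Eba by auto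
    from m1 m2 have "(frac t, Ycd t) = c" using adj[OF F V(3,4,2)] ne by blast
    hence "frac t = frac (xc - 1)" using pa fx(2)[of xc] x by auto
    hence "t = xc - 1" by (rule frac_inj) (use t x in auto)
    thus False using t x by auto
  qed
  have H6: "\<forall>t\<in>{xd-1<..<xa}. \<sigma> * Ycd t \<noteq> \<sigma> * Yc t"
  proof (intro ballI notI)
    fix t assume t: "t \<in> {xd-1<..<xa}" and e: "\<sigma> * Ycd t = \<sigma> * Yc t"
    have m1: "(frac t, Ycd t) \<in> E c d" using Ycd(4)[of t] t x Eba by auto
    have m2: "(frac t, Ycd t) \<in> E c a" using Yc(4)[of t] t x e sn Eba by auto
    from m1 m2 have "(frac t, Ycd t) = c" using adj[OF F V(3,4,1)] ne by blast
    hence "frac t = frac (xc - 1)" using pa fx(2)[of xc] x by auto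
    hence "t = xc - 1" by (rule frac_inj) (use t x in auto)
    thus False using t x by auto
  qed
  have P1: "\<sigma> * Yc (xd-1) \<noteq> \<sigma> * yd"
  proof
    assume "\<sigma> * Yc (xd-1) = \<sigma> * yd"
    hence "(frac (xd-1), Yc (xd-1)) = d" using sn pa fx(2)[of xd] x by auto
    moreover have "(frac (xd-1), Yc (xd-1)) \<in> E a c" using Yc(4)[of "xd-1"] x by auto
    ultimately show False using avoid[OF F V(1,3,4)] ne by auto
  qed
  have P2: "\<sigma> * Ybc xa \<noteq> \<sigma> * ya"
  proof
    assume "\<sigma> * Ybc xa = \<sigma> * ya"
    hence "(frac xa, Ybc xa) = a" using sn pa fx(1)[of xa] x by auto
    moreover have "(frac xa, Ybc xa) \<in> E b c" using Ybc(4)[of xa] x by auto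
    ultimately show False using avoid[OF F V(2,3,1)] ne by auto
  qed
  have P3: "\<sigma> * Ycd xb \<noteq> \<sigma> * yb"
  proof
    assume "\<sigma> * Ycd xb = \<sigma> * yb"
    hence "(frac xb, Ycd xb) = b" using sn pa fx(1)[of xb] x by auto
    moreover have "(frac xb, Ycd xb) \<in> E c d" using Ycd(4)[of xb] x by auto
    ultimately show False using avoid[OF F V(3,4,2)] ne by auto
  qed
  have P4: "\<sigma> * Ycd xa \<noteq> \<sigma> * ya"
  proof
    assume "\<sigma> * Ycd xa = \<sigma> * ya"
    hence "(frac xa, Ycd xa) = a" using sn pa fx(1)[of xa] x by auto
    moreover have "(frac xa, Ycd xa) \<in> E c d" using Ycd(4)[of xa] x by auto
    ultimately show False using avoid[OF F V(3,4,1)] ne by auto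
  qed
  have two: "\<not> (\<exists>t1\<in>{xd-1<..<xa}. \<exists>t2\<in>{xb<..<xc}. \<sigma> * Ycd t1 = \<sigma> * Yb t1 \<and> \<sigma> * Ycd t2 = \<sigma> * Yb (t2-1))"
  proof
    assume "\<exists>t1\<in>{xd-1<..<xa}. \<exists>t2\<in>{xb<..<xc}. \<sigma> * Ycd t1 = \<sigma> * Yb t1 \<and> \<sigma> * Ycd t2 = \<sigma> * Yb (t2-1)"
    then obtain t1 t2 where t: "t1 \<in> {xd-1<..<xa}" "t2 \<in> {xb<..<xc}" "Ycd t1 = Yb t1" "Ycd t2 = Yb (t2-1)"
      using sn by auto
    have f2: "frac t2 = frac (t2 - 1)" by (metis diff_add_cancel frac_1_eq)
    have "(frac t1, Yb t1) \<in> E a b" "(frac t1, Yb t1) \<in> E c d" using t Yb(4) Ycd(4)[of t1] x by auto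
    moreover have "(frac (t2-1), Yb (t2-1)) \<in> E a b" "(frac (t2-1), Yb (t2-1)) \<in> E c d"
      using t Yb(4)[of "t2-1"] Ycd(4)[of t2] x f2 by auto
    ultimately have "(frac t1, Yb t1) = (frac (t2-1), Yb (t2-1))"
      using nonadj[OF F V] ne by blast
    hence "frac t1 = frac (t2 - 1)" by simp
    hence "t1 = t2 - 1" by (rule frac_inj) (use t x in auto)
    thus False using t x by auto
  qed
  have c1: "continuous_on {xb-1..xa} (\<lambda>t. \<sigma> * Yb t)" by (intro continuous_intros Yb(1))
  have c2: "continuous_on {xc-1..xa} (\<lambda>t. \<sigma> * Yc t)" by (intro continuous_intros Yc(1))
  have c3: "continuous_on {xd-1..xa} (\<lambda>t. \<sigma> * Yd t)" by (intro continuous_intros Yd(1))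
  have c4: "continuous_on {xc-1..xb} (\<lambda>t. \<sigma> * Ybc t)" by (intro continuous_intros Ybc(1))
  have c5: "continuous_on {xd-1..xc} (\<lambda>t. \<sigma> * Ycd t)" by (intro continuous_intros Ycd(1))
  have core_res: "\<forall>t\<in>{xd-1<..<xa}. \<sigma> * Yc t \<le> \<sigma> * Yd t"
    using core[where Yb="\<lambda>t. \<sigma> * Yb t" and Yc="\<lambda>t. \<sigma> * Yc t" and Yd="\<lambda>t. \<sigma> * Yd t"
          and Ybc="\<lambda>t. \<sigma> * Ybc t" and Ycd="\<lambda>t. \<sigma> * Ycd t" and ya="\<sigma> * ya" and yb="\<sigma> * yb"
          and yc="\<sigma> * yc" and yd="\<sigma> * yd", OF x c1 _ _ c2 _ _ c3 _ _ c4 _ _ c5 _ _ a1 a2 H1 H2 H3 H4 H5 H6 P1 P2 P3 P4 two]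
     Yb(2,3) Yc(2,3) Yd(2,3) Ybc(2,3) Ycd(2,3) by simp
  show ?thesis
  proof
    fix z assume "z \<in> xproj (edge_ri E a c) \<inter> xproj (edge_ri E a d)"
    then obtain t1 t2 where t: "t1 \<in> {xc - 1<..<xa}" "z = frac t1" "t2 \<in> {xd - 1<..<xa}" "z = frac t2"
      using Yc(5) Yd(5) by blast
    have "frac t1 = frac t2" using t by simp
    hence "t1 = t2" by (rule frac_inj) (use t x in auto)
    thus "\<sigma> * yval (edge_ri E a c) z \<le> \<sigma> * yval (edge_ri E a d) z"
      using core_res Yc(6) Yd(6) t by auto
  qed
qed



lemma not_xproj_end:
  assumes F: "flag V E" and u: "u \<in> V" and w: "w \<in> V" and uw: "u \<noteq> w"
  shows "fst u \<notin> xproj (edge_ri E u w)" "fst w \<notin> xproj (edge_ri E u w)"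
proof -
  have mono: "\<And>a y y'. (a, y) \<in> E u w \<Longrightarrow> (a, y') \<in> E u w \<Longrightarrow> y = y'"
    using fl8[OF F] u w uw by blast
  have e: "u \<in> E u w" "w \<in> E u w" using endpts[OF F u w uw] by auto
  show "fst u \<notin> xproj (edge_ri E u w)"
  proof
    assume "fst u \<in> xproj (edge_ri E u w)"
    then obtain y where y: "(fst u, y) \<in> edge_ri E u w" unfolding xproj_def by auto
    hence "(fst u, y) \<in> E u w" unfolding edge_ri_def by auto
    hence "y = snd u" using mono[of "fst u" y "snd u"] e by simp
    thus False using y unfolding edge_ri_def by auto
  qed
  show "fst w \<notin> xproj (edge_ri E u w)"
  proof
    assume "fst w \<in> xproj (edge_ri E u w)"
    then obtain y where y: "(fst w, y) \<in> edge_ri E u w" unfolding xproj_def by auto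
    hence "(fst w, y) \<in> E u w" unfolding edge_ri_def by auto
    hence "y = snd w" using mono[of "fst w" y "snd w"] e by simp
    thus False using y unfolding edge_ri_def by auto
  qed
qed

lemma prec_from:
  assumes F: "flag V E" and V: "a \<in> V" "c \<in> V" "d \<in> V" and ne: "a \<noteq> c" "a \<noteq> d" "c \<noteq> d"
    and le: "\<forall>x \<in> xproj (edge_ri E a c) \<inter> xproj (edge_ri E a d). yval (edge_ri E a c) x \<le> yval (edge_ri E a d) x"
  shows "curve_prec (edge_ri E a c) (edge_ri E a d)"
proof -
  have nc: "\<not> crosses (edge_ri E a c) (edge_ri E a d)"
  proof
    assume "crosses (edge_ri E a c) (edge_ri E a d)"
    then obtain p where "p \<in> edge_ri E a c" "p \<in> edge_ri E a d" unfolding crosses_def crosses_at_def by blast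
    moreover hence "p = a" using adj[OF F V ne] unfolding edge_ri_def by blast
    ultimately show False unfolding edge_ri_def by blast
  qed
  obtain y1 where "(0, y1) \<in> edge_ri E a c" using fl9[OF F] V ne by blast
  moreover obtain y2 where "(0, y2) \<in> edge_ri E a d" using fl9[OF F] V ne by blast
  ultimately have "0 \<in> xproj (edge_ri E a c) \<inter> xproj (edge_ri E a d)" unfolding xproj_def by auto
  thus ?thesis using nc le unfolding curve_prec_def curves_related_def by blast
qed

theorem lemma13:
  fixes v :: "nat \<Rightarrow> pt" and n :: nat and E :: "pt \<Rightarrow> pt \<Rightarrow> pt set"
  assumes "n \<ge> 2"
    and "flag (v ` {1..n}) E"
    and "\<forall>i j. 1 \<le> i \<and> i < j \<and> j \<le> n \<longrightarrow> fst (v i) < fst (v j)"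
  shows "(\<forall>i1 i2. 1 \<le> i1 \<and> i1 < i2 \<and> i2 \<le> n \<and>
            pt_above (v i1) (edge_ri E (v 1) (v 2)) \<and> pt_above (v i2) (edge_ri E (v 1) (v 2)) \<longrightarrow>
            curve_prec (edge_ri E (v 1) (v i1)) (edge_ri E (v 1) (v i2))) \<and>
         (\<forall>i1 i2. 1 \<le> i1 \<and> i1 < i2 \<and> i2 \<le> n \<and>
            pt_below (v i1) (edge_ri E (v 1) (v 2)) \<and> pt_below (v i2) (edge_ri E (v 1) (v 2)) \<longrightarrow>
            curve_prec (edge_ri E (v 1) (v i2)) (edge_ri E (v 1) (v i1)))"
proof -
  note F = assms(2)
  have ord: "\<And>i j. 1 \<le> i \<Longrightarrow> i < j \<Longrightarrow> j \<le> n \<Longrightarrow> fst (v i) < fst (v j)" using assms(3) by blast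
  have inV: "\<And>i. 1 \<le> i \<Longrightarrow> i \<le> n \<Longrightarrow> v i \<in> v ` {1..n}" by auto
  have o12: "fst (v 1) < fst (v 2)" using ord[of 1 2] assms(1) by simp
  have ne12: "v 1 \<noteq> v 2" using o12 by auto
  have V12: "v 1 \<in> v ` {1..n}" "v 2 \<in> v ` {1..n}" using assms(1) by auto
  note nx = not_xproj_end[OF F V12 ne12]
  have i3: "3 \<le> i1"
    if i: "1 \<le> i1" "i1 < i2" "i2 \<le> n" and x1: "fst (v i1) \<in> xproj (edge_ri E (v 1) (v 2))" for i1 i2
  proof -
    have "i1 \<noteq> 1" using x1 nx by auto
    moreover have "i1 \<noteq> 2" using x1 nx by auto
    ultimately show ?thesis using i by auto
  qed
  have oo: "fst (v 1) < fst (v 2)" "fst (v 2) < fst (v i1)" "fst (v i1) < fst (v i2)"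
    if i: "1 \<le> i1" "i1 < i2" "i2 \<le> n" and x1: "fst (v i1) \<in> xproj (edge_ri E (v 1) (v 2))" for i1 i2
    using ord[of 1 2] ord[of 2 i1] ord[of i1 i2] i i3[OF i x1] by auto
  have ne: "v 1 \<noteq> v i1" "v 1 \<noteq> v i2" "v i1 \<noteq> v i2"
    and Vs: "v i1 \<in> v ` {1..n}" "v i2 \<in> v ` {1..n}"
    if i: "1 \<le> i1" "i1 < i2" "i2 \<le> n" and x1: "fst (v i1) \<in> xproj (edge_ri E (v 1) (v 2))" for i1 i2
    using oo[OF i x1] i by auto
  have main: "\<forall>x \<in> xproj (edge_ri E (v 1) (v i1)) \<inter> xproj (edge_ri E (v 1) (v i2)).
           \<sigma> * yval (edge_ri E (v 1) (v i1)) x \<le> \<sigma> * yval (edge_ri E (v 1) (v i2)) x"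
    if i: "1 \<le> i1" "i1 < i2" "i2 \<le> n" and x1: "fst (v i1) \<in> xproj (edge_ri E (v 1) (v 2))"
      and sg: "\<sigma> = 1 \<or> \<sigma> = (-1::real)"
      and h1: "\<sigma> * yval (edge_ri E (v 1) (v 2)) (fst (v i1)) < \<sigma> * snd (v i1)"
      and h2: "\<sigma> * yval (edge_ri E (v 1) (v 2)) (fst (v i2)) < \<sigma> * snd (v i2)"
    for i1 i2 \<sigma>
    by (rule geo[OF F V12 Vs[OF i x1] oo[OF i x1] sg h1 h2])
  show ?thesis
  proof (intro conjI allI impI)
    fix i1 i2 assume h: "1 \<le> i1 \<and> i1 < i2 \<and> i2 \<le> n \<and>
            pt_above (v i1) (edge_ri E (v 1) (v 2)) \<and> pt_above (v i2) (edge_ri E (v 1) (v 2))"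
    hence p: "1 \<le> i1" "i1 < i2" "i2 \<le> n" "fst (v i1) \<in> xproj (edge_ri E (v 1) (v 2))"
      "fst (v i2) \<in> xproj (edge_ri E (v 1) (v 2))"
      "1 * yval (edge_ri E (v 1) (v 2)) (fst (v i1)) < 1 * snd (v i1)"
      "1 * yval (edge_ri E (v 1) (v 2)) (fst (v i2)) < 1 * snd (v i2)"
      unfolding pt_above_def by auto
    have "\<forall>x \<in> xproj (edge_ri E (v 1) (v i1)) \<inter> xproj (edge_ri E (v 1) (v i2)).
           1 * yval (edge_ri E (v 1) (v i1)) x \<le> 1 * yval (edge_ri E (v 1) (v i2)) x"
      using main[OF p(1-4) _ p(6,7)] by simp
    hence le: "\<forall>x \<in> xproj (edge_ri E (v 1) (v i1)) \<inter> xproj (edge_ri E (v 1) (v i2)).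
           yval (edge_ri E (v 1) (v i1)) x \<le> yval (edge_ri E (v 1) (v i2)) x" by simp
    show "curve_prec (edge_ri E (v 1) (v i1)) (edge_ri E (v 1) (v i2))"
      by (rule prec_from[OF F V12(1) Vs[OF p(1-4)] ne[OF p(1-4)] le])
  next
    fix i1 i2 assume h: "1 \<le> i1 \<and> i1 < i2 \<and> i2 \<le> n \<and>
            pt_below (v i1) (edge_ri E (v 1) (v 2)) \<and> pt_below (v i2) (edge_ri E (v 1) (v 2))"
    hence p: "1 \<le> i1" "i1 < i2" "i2 \<le> n" "fst (v i1) \<in> xproj (edge_ri E (v 1) (v 2))"
      "fst (v i2) \<in> xproj (edge_ri E (v 1) (v 2))"
      "(-1) * yval (edge_ri E (v 1) (v 2)) (fst (v i1)) < (-1) * snd (v i1)"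
      "(-1) * yval (edge_ri E (v 1) (v 2)) (fst (v i2)) < (-1) * snd (v i2)"
      unfolding pt_below_def by auto
    have "\<forall>x \<in> xproj (edge_ri E (v 1) (v i1)) \<inter> xproj (edge_ri E (v 1) (v i2)).
           (-1) * yval (edge_ri E (v 1) (v i1)) x \<le> (-1) * yval (edge_ri E (v 1) (v i2)) x"
      using main[OF p(1-4) _ p(6,7)] by simp
    hence le: "\<forall>x \<in> xproj (edge_ri E (v 1) (v i2)) \<inter> xproj (edge_ri E (v 1) (v i1)).
           yval (edge_ri E (v 1) (v i2)) x \<le> yval (edge_ri E (v 1) (v i1)) x" by auto
    have ne': "v 1 \<noteq> v i2" "v 1 \<noteq> v i1" "v i2 \<noteq> v i1" using ne[OF p(1-4)] by auto
    show "curve_prec (edge_ri E (v 1) (v i2)) (edge_ri E (v 1) (v i1))"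
      by (rule prec_from[OF F V12(1) Vs(2)[OF p(1-4)] Vs(1)[OF p(1-4)] ne' le])
  qed
qed

end
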